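(* Assume $q \in D_0$ and, for each $i\in\{1,2\}$, $q\bmod n_i$ is a quadratic residue modulo $n_i$. For $(i,j,h)\in\{0,1\}^3$ let $\mathcal{D}_{(i,j,h)}$ be the cyclic code of length $n$ over $\mathrm{GF}(q)$ with generator polynomial $d_i(x)d_j^{(n_1)}(x)d_h^{(n_2)}(x)$. Then each $\mathcal{D}_{(i,j,h)}$ has length $n$ and dimension $(n+1)/2$, and its minimum odd-like weight $d_{(i,j,h)}$ satisfies $d_{(i,j,h)}\ge\sqrt n$. Moreover, if $n_1\equiv -1\pmod 8$ and $n_2\equiv -1\pmod 8$, then $d_{(i,j,h)}^2-d_{(i,j,h)}+1\ge n$.
   Context: Let $n_1,n_2$ be distinct odd primes, $n=n_1n_2$, and let $q$ be a prime power with $\gcd(q,n)=1$. Let $d=\gcd(n_1-1,n_2-1)$ and $e=(n_1-1)(n_2-1)/d$. Let $g_1,g_2$ be primitive roots modulo $n_1,n_2$ respectively, let $g$ be the integer modulo $n$ with $g\equiv g_1 \pmod{n_1}$, $g\equiv g_2\pmod{n_2}$, and let $\nu$ be the integer modulo $n$ with $\nu\equiv g\pmod{n_1}$, $\nu\equiv 1\pmod{n_2}$. It is known that every element of $\mathbb{Z}_n^*$ can be written uniquely as $g^s\nu^i$ with $0\le s\le e-1$, $0\le i\le d-1$. Define $D_0=\{g^{2s}\nu^i: 0\le s\le (e-2)/2,\ 0\le i\le d-1\}$ and $D_1=\{g^{2s+1}\nu^i: 0\le s\le (e-2)/2,\ 0\le i\le d-1\}$. For $j\in\{1,2\}$ let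 $D_0^{(n_j)}$, $D_1^{(n_j)}$ be the sets of quadratic residues and nonresidues modulo $n_j$. Let $N=\mathrm{ord}_n(q)$ and $\theta$ a primitive $n$-th root of unity in $\mathrm{GF}(q^N)$. Define $d_i(x)=\prod_{j\in D_i}(x-\theta^j)$, $d_i^{(n_1)}(x)=\prod_{j\in D_i^{(n_1)}}(x-\theta^{n_2 j})$, $d_i^{(n_2)}(x)=\prod_{j\in D_i^{(n_2)}}(x-\theta^{n_1 j})$ for $i\in\{0,1\}$; under the hypotheses these lie in $\mathrm{GF}(q)[x]$. Cyclic codes of length $n$ are identified with ideals of $\mathrm{GF}(q)[x]/(x^n-1)$. A codeword $(c_0,\dots,c_{n-1})$ is odd-like if $\sum_i c_i\neq 0$; the minimum odd-like weight is the minimum Hamming weight of odd-like codewords. *)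

theory Defs
  imports "HOL-Number_Theory.Number_Theory" "HOL-Computational_Algebra.Polynomial"
begin

definition dd :: "nat \<Rightarrow> nat \<Rightarrow> nat" where
  "dd n1 n2 = gcd (n1 - 1) (n2 - 1)"

definition ee :: "nat \<Rightarrow> nat \<Rightarrow> nat" where
  "ee n1 n2 = (n1 - 1) * (n2 - 1) div dd n1 n2"

(* D_0 (b = 0) and D_1 (b = 1), as sets of residues in {0..<n1*n2} *)
definition Dset :: "nat \<Rightarrow> nat \<Rightarrow> nat \<Rightarrow> nat \<Rightarrow> nat \<Rightarrow> nat set" where
  "Dset n1 n2 g \<nu> b = {(g ^ (2 * s + b) * \<nu> ^ i) mod (n1 * n2) | s i.
      s \<le> (ee n1 n2 - 2) div 2 \<and> i \<le> dd n1 n2 - 1}"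

definition QRset :: "nat \<Rightarrow> nat \<Rightarrow> nat set" where
  "QRset p b = {a. 0 < a \<and> a < p \<and>
      (if b = 0 then QuadRes (int p) (int a) else \<not> QuadRes (int p) (int a))}"

definition rootprod :: "'b::field \<Rightarrow> nat set \<Rightarrow> nat \<Rightarrow> 'b poly" where
  "rootprod \<theta> S m = (\<Prod>j\<in>S. [:- (\<theta> ^ (m * j)), 1:])"

(* cyclic code of length n with generator polynomial gp: the ideal (gp) in F[x]/(x^n-1),
   codewords represented by their reduced polynomials c, i.e. (c_0,...,c_{n-1}) = coefficients *)
definition cyclic_code :: "nat \<Rightarrow> 'a::field poly \<Rightarrow> 'a poly set" where
  "cyclic_code n gp = {(a * gp) mod (monom 1 n - 1) | a. True}"

definition hweight :: "nat \<Rightarrow> 'a::zero poly \<Rightarrow> nat" where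
  "hweight n c = card {i. i < n \<and> coeff c i \<noteq> 0}"

definition odd_like :: "nat \<Rightarrow> 'a::comm_monoid_add poly \<Rightarrow> bool" where
  "odd_like n c \<longleftrightarrow> (\<Sum>i<n. coeff c i) \<noteq> 0"

definition min_odd_like_weight :: "nat \<Rightarrow> 'a::field poly set \<Rightarrow> nat" where
  "min_odd_like_weight n C = Min {hweight n c | c. c \<in> C \<and> odd_like n c}"

definition code_dim :: "'a::field poly set \<Rightarrow> nat" where
  "code_dim C = vector_space.dim smult C"

end

theory Submission
  imports Defs
begin

lemma Legendre_vals: "Legendre a p \<in> {-1,0,1}"
  by (auto simp: Legendre_def)

lemma Legendre_mult:
  assumes "prime (p::nat)" "2 < p"
  shows "Legendre (a*b) (int p) = Legendre a (int p) * Legendre b (int p)"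
proof -
  have 1: "[Legendre (a*b) p = (a*b) ^ ((p - 1) div 2)] (mod p)"
    using euler_criterion[OF assms] by blast
  have 2: "[Legendre a p * Legendre b p = a ^ ((p - 1) div 2) * b ^ ((p - 1) div 2)] (mod p)"
    using euler_criterion[OF assms, of a] euler_criterion[OF assms, of b] by (rule cong_mult)
  have c: "[Legendre (a*b) p = Legendre a p * Legendre b p] (mod p)"
    using 1 2 unfolding power_mult_distrib by (meson cong_sym cong_trans)
  define D where "D = Legendre (a*b) p - Legendre a p * Legendre b p"
  have dv: "int p dvd D"
    using c by (simp add: cong_iff_dvd_diff D_def)
  have "\<bar>D\<bar> \<le> 2"
  proof -
    have "\<bar>Legendre (a*b) p\<bar> \<le> 1" "\<bar>Legendre a p\<bar> \<le> 1" "\<bar>Legendre b p\<bar> \<le> 1"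
      using Legendre_vals[of "a*b" p] Legendre_vals[of a p] Legendre_vals[of b p] by auto
    then have "\<bar>Legendre a p * Legendre b p\<bar> \<le> 1" by (simp add: abs_mult mult_le_one)
    then show ?thesis unfolding D_def using \<open>\<bar>Legendre (a*b) p\<bar> \<le> 1\<close> by linarith
  qed
  have "D = 0"
  proof (rule ccontr)
    assume "D \<noteq> 0"
    then have "\<bar>int p\<bar> \<le> \<bar>D\<bar>" using dvd_imp_le_int dv by blast
    then show False using \<open>\<bar>D\<bar> \<le> 2\<close> assms by simp
  qed
  then show ?thesis by (simp add: D_def)
qed

lemma Legendre_cong: assumes "[a = b] (mod p)" shows "Legendre a p = Legendre b p"
proof -
  have 1: "QuadRes p a = QuadRes p b" unfolding QuadRes_def using assms by (meson cong_sym cong_trans)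
  have 2: "[a = 0] (mod p) = [b = 0] (mod p)" using assms by (meson cong_sym cong_trans)
  show ?thesis unfolding Legendre_def using 1 2 by simp
qed

lemma Legendre_one: "p > 1 \<Longrightarrow> Legendre 1 p = 1"
proof -
  assume p: "p > 1"
  have "QuadRes p 1" unfolding QuadRes_def by (rule exI[of _ 1]) simp
  moreover have "\<not> [1 = 0] (mod p)" using p by (simp add: cong_def)
  ultimately show ?thesis unfolding Legendre_def by simp
qed

lemma Legendre_pow:
  assumes "prime (p::nat)" "2 < p"
  shows "Legendre (a^k) (int p) = Legendre a (int p) ^ k"
proof (induction k)
  case 0 then show ?case using assms Legendre_one[of "int p"] by simp
next
  case (Suc k) then show ?case using Legendre_mult[OF assms, of a "a^k"] by simp
qed

lemma Legendre_nonzero: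
  assumes "prime (p::nat)" "coprime a p"
  shows "Legendre (int a) (int p) \<in> {1,-1}"
proof -
  have "\<not> [int a = 0] (mod int p)"
  proof
    assume "[int a = 0] (mod int p)"
    then have "p dvd a" by (metis cong_0_iff int_dvd_int_iff)
    then show False using assms by (metis coprime_absorb_right coprime_commute not_prime_unit)
  qed
  then show ?thesis unfolding Legendre_def by auto
qed

lemma Legendre_primroot:
  assumes "prime (p::nat)" "2 < p" "residue_primroot p g"
  shows "Legendre (int g) (int p) = -1"
proof (rule ccontr)
  assume ne: "Legendre (int g) (int p) \<noteq> -1"
  have cop: "coprime g p" using assms(3) by (simp add: residue_primroot_def coprime_commute)
  have L1: "Legendre (int g) (int p) = 1" using Legendre_nonzero[OF assms(1) cop] ne by auto
  have "[1 = int g ^ ((p - 1) div 2)] (mod int p)"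
    using euler_criterion[OF assms(1,2), of "int g"] L1 by simp
  then have "[g ^ ((p - 1) div 2) = 1] (mod p)"
    by (metis cong_int_iff cong_sym of_nat_1 of_nat_power)
  then have "ord p g dvd (p - 1) div 2" by (simp add: ord_divides')
  moreover have "ord p g = p - 1" using assms by (simp add: residue_primroot_def totient_prime)
  moreover have "0 < (p - 1) div 2" using assms by simp
  ultimately have "p - 1 \<le> (p - 1) div 2" by (simp add: dvd_imp_le)
  then show False using assms by simp
qed

lemma Legendre_minus_one:
  assumes "prime (p::nat)" "p mod 4 = 3"
  shows "Legendre (-1) (int p) = -1"
proof -
  have p2: "2 < p" using assms prime_ge_2_nat[OF assms(1)] by (cases "p = 2") auto
  have "odd ((p - 1) div 2)"
  proof -
    obtain k where "p = 4*k + 3" using assms by (metis div_mod_decomp mult.commute)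
    then have "(p - 1) div 2 = 2*k+1" by simp
    then show ?thesis by simp
  qed
  then have c: "[Legendre (-1) p = -1] (mod p)"
    using euler_criterion[OF assms(1) p2, of "-1"] by simp
  have "\<not> [-1 = 0] (mod int p)"
  proof
    assume "[-1 = 0] (mod int p)"
    then have "int p dvd 1" by (simp add: cong_0_iff)
    then show False using p2 by simp
  qed
  then have "Legendre (-1) p \<in> {1,-1}" unfolding Legendre_def by auto
  moreover have "Legendre (-1) p \<noteq> 1"
  proof
    assume "Legendre (-1) p = 1"
    then have "[1 = -1] (mod int p)" using c by simp
    then have "int p dvd 2" by (simp add: cong_iff_dvd_diff)
    then have "int p \<le> 2" using zdvd_imp_le[of "int p" 2] by linarith
    then show False using p2 by simp
  qed
  ultimately show ?thesis by auto
qed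

locale dsetup =
  fixes n1 n2 g1 g2 g \<nu> :: nat
  assumes p1: "prime n1" and p2: "prime n2" and o1: "odd n1" and o2: "odd n2" and ne: "n1 \<noteq> n2"
    and r1: "residue_primroot n1 g1" and r2: "residue_primroot n2 g2"
    and gg1: "[g = g1] (mod n1)" and gg2: "[g = g2] (mod n2)"
    and nu1: "[\<nu> = g] (mod n1)" and nu2: "[\<nu> = 1] (mod n2)"
begin

definition U where "U = {x. x < n1*n2 \<and> coprime x (n1*n2)}"

lemma n1_gt2: "n1 > 2" using p1 o1 prime_ge_2_nat[OF p1] by (cases "n1 = 2") auto
lemma n2_gt2: "n2 > 2" using p2 o2 prime_ge_2_nat[OF p2] by (cases "n2 = 2") auto
lemma cop12: "coprime n1 n2" using p1 p2 ne by (simp add: primes_coprime)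

lemma d_dvd1: "dd n1 n2 dvd n1 - 1" unfolding dd_def by simp
lemma d_dvd2: "dd n1 n2 dvd n2 - 1" unfolding dd_def by simp
lemma d_pos: "dd n1 n2 > 0" unfolding dd_def using n1_gt2 by simp

lemma e_lcm: "ee n1 n2 = lcm (n1 - 1) (n2 - 1)"
proof -
  have "(n1 - 1) * (n2 - 1) = gcd (n1 - 1) (n2 - 1) * lcm (n1 - 1) (n2 - 1)"
    by (rule prod_gcd_lcm_nat)
  moreover have "gcd (n1 - 1) (n2 - 1) > 0" using d_pos unfolding dd_def .
  ultimately show ?thesis unfolding ee_def dd_def by (metis nonzero_mult_div_cancel_left less_irrefl)
qed

lemma ed: "ee n1 n2 * dd n1 n2 = (n1 - 1) * (n2 - 1)"
  unfolding e_lcm unfolding dd_def using prod_gcd_lcm_nat[of "n1 - 1" "n2 - 1"] by (simp add: mult.commute)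

lemma e_even: "even (ee n1 n2)"
proof -
  have "even (n2 - 1)" using o2 n2_gt2 by simp
  moreover have "n2 - 1 dvd ee n1 n2" unfolding e_lcm by simp
  ultimately show ?thesis by (meson dvd_trans)
qed

lemma e_pos: "ee n1 n2 > 0" unfolding e_lcm using n1_gt2 n2_gt2 by (simp add: lcm_pos_nat)

lemma cop_g1: "coprime g1 n1" using r1 by (simp add: residue_primroot_def coprime_commute)
lemma cop_g2: "coprime g2 n2" using r2 by (simp add: residue_primroot_def coprime_commute)
lemma ord1: "ord n1 g1 = n1 - 1" using r1 p1 by (simp add: residue_primroot_def totient_prime)
lemma ord2: "ord n2 g2 = n2 - 1" using r2 p2 by (simp add: residue_primroot_def totient_prime)

lemma cop_g: "coprime g (n1*n2)"
proof -
  have "coprime g n1" using cong_imp_coprime[OF cong_sym[OF gg1] cop_g1] .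
  moreover have "coprime g n2" using cong_imp_coprime[OF cong_sym[OF gg2] cop_g2] .
  ultimately show ?thesis by simp
qed

lemma cop_nu: "coprime \<nu> (n1*n2)"
proof -
  have "coprime g n1" using cop_g by simp
  then have "coprime \<nu> n1" using cong_imp_coprime[OF cong_sym[OF nu1]] by blast
  moreover have "coprime \<nu> n2" using cong_imp_coprime[OF cong_sym[OF nu2]] by simp
  ultimately show ?thesis by simp
qed

lemma rep_mod2: "[g^s * \<nu>^t = g2^s] (mod n2)"
proof -
  have "[g^s = g2^s] (mod n2)" using gg2 by (rule cong_pow)
  moreover have "[\<nu>^t = 1^t] (mod n2)" using nu2 by (rule cong_pow)
  ultimately show ?thesis using cong_mult by fastforce
qed

lemma rep_mod1: "[g^s * \<nu>^t = g1^(s+t)] (mod n1)"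
proof -
  have "[g^s = g1^s] (mod n1)" using gg1 by (rule cong_pow)
  moreover have "[\<nu>^t = g1^t] (mod n1)" using cong_trans[OF nu1 gg1] by (rule cong_pow)
  ultimately show ?thesis using cong_mult by (fastforce simp: power_add)
qed

lemma rep_inj:
  assumes "s < ee n1 n2" "s' < ee n1 n2" "t < dd n1 n2" "t' < dd n1 n2"
    and eq: "(g^s * \<nu>^t) mod (n1*n2) = (g^s' * \<nu>^t') mod (n1*n2)"
  shows "s = s' \<and> t = t'"
proof -
  have c: "[g^s * \<nu>^t = g^s' * \<nu>^t'] (mod n1*n2)" using eq by (simp add: cong_def)
  have c2: "[g^s * \<nu>^t = g^s' * \<nu>^t'] (mod n2)" using cong_dvd_modulus_nat[OF c] by simp
  have c1: "[g^s * \<nu>^t = g^s' * \<nu>^t'] (mod n1)" using cong_dvd_modulus_nat[OF c] by simp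
  have "[g2^s = g2^s'] (mod n2)"
    using c2 rep_mod2[of s t] rep_mod2[of s' t'] by (meson cong_sym cong_trans)
  then have s2: "[s = s'] (mod n2 - 1)"
    using order_divides_expdiff[of n2 g2 s s'] cop_g2 ord2 by (simp add: coprime_commute)
  have "[g1^(s+t) = g1^(s'+t')] (mod n1)"
    using c1 rep_mod1[of s t] rep_mod1[of s' t'] by (meson cong_sym cong_trans)
  then have s1: "[s + t = s' + t'] (mod n1 - 1)"
    using order_divides_expdiff[of n1 g1 "s+t" "s'+t'"] cop_g1 ord1 by (simp add: coprime_commute)
  have sd: "[s = s'] (mod dd n1 n2)" using cong_dvd_modulus_nat[OF s2 d_dvd2] .
  have std: "[s + t = s' + t'] (mod dd n1 n2)" using cong_dvd_modulus_nat[OF s1 d_dvd1] .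
  have "[s' + t = s' + t'] (mod dd n1 n2)"
    using std cong_add[OF sd cong_refl[of t]] by (meson cong_sym cong_trans)
  then have "[t = t'] (mod dd n1 n2)" by (simp add: cong_add_lcancel_nat)
  then have tt: "t = t'" using assms(3,4) cong_less_modulus_unique_nat by blast
  then have "[s = s'] (mod n1 - 1)" using s1 by (simp add: cong_add_rcancel_nat)
  then have "[s = s'] (mod ee n1 n2)" unfolding e_lcm using s2 by (rule cong_cong_lcm_nat)
  then have "s = s'" using assms(1,2) cong_less_modulus_unique_nat by blast
  with tt show ?thesis by simp
qed

lemma rep_U: "(g^s * \<nu>^t) mod (n1*n2) \<in> U"
proof -
  have "n1 * n2 > 0" using n1_gt2 n2_gt2 by simp
  moreover have "coprime (g^s * \<nu>^t) (n1*n2)" using cop_g cop_nu by simp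
  ultimately show ?thesis unfolding U_def by (simp del: coprime_mult_right_iff)
qed

lemma card_U: "card U = (n1 - 1) * (n2 - 1)"
proof -
  have "U = totatives (n1*n2)"
  proof -
    have "n1*n2 > 1" using n1_gt2 n2_gt2 by (simp add: one_less_mult)
    then show ?thesis unfolding U_def totatives_def
      by (auto simp: le_less intro!: Nat.gr0I)
  qed
  then have "card U = totient (n1*n2)" by (simp add: totient_def)
  also have "\<dots> = (n1 - 1) * (n2 - 1)" using totient_mult_coprime[OF cop12] p1 p2 by (simp add: totient_prime)
  finally show ?thesis .
qed

lemma finite_U: "finite U" unfolding U_def by simp

lemma rep_surj:
  assumes "x \<in> U"
  shows "\<exists>s t. s < ee n1 n2 \<and> t < dd n1 n2 \<and> x = (g^s * \<nu>^t) mod (n1*n2)"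
proof -
  let ?f = "\<lambda>(s,t). (g^s * \<nu>^t) mod (n1*n2)"
  let ?A = "{..<ee n1 n2} \<times> {..<dd n1 n2}"
  have inj: "inj_on ?f ?A" by (auto intro!: inj_onI dest: rep_inj)
  have sub: "?f ` ?A \<subseteq> U" using rep_U by auto
  have "card (?f ` ?A) = card U"
    using card_image[OF inj] ed card_U by (simp add: card_cartesian_product)
  then have "?f ` ?A = U" using sub finite_U by (simp add: card_subset_eq)
  then show ?thesis using assms by force
qed

end

lemma flip_card:
  assumes "finite S" "A \<union> B = S" "A \<inter> B = {}" "inj_on \<phi> S" "\<phi> ` A \<subseteq> B" "\<phi> ` B \<subseteq> A"
  shows "card A = card B" "2 * card A = card S"
proof -
  have fA: "finite A" "finite B" using assms(1,2) by auto
  have "card A \<le> card B"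
    using card_inj_on_le[of \<phi> A B] assms fA by (meson inj_on_subset sup_ge1)
  moreover have "card B \<le> card A"
    using card_inj_on_le[of \<phi> B A] assms fA by (meson inj_on_subset sup_ge2)
  ultimately show c: "card A = card B" by simp
  have "card S = card A + card B" using assms(2,3) fA card_Un_disjoint by blast
  then show "2 * card A = card S" using c by simp
qed

lemma Legendre_nat_mod:
  assumes "p dvd m"
  shows "Legendre (int (x mod m)) (int p) = Legendre (int x) (int p)"
proof (rule Legendre_cong)
  have "[x mod m = x] (mod p)" using assms by (metis cong_dvd_modulus_nat cong_mod_left cong_refl)
  then show "[int (x mod m) = int x] (mod int p)" by (simp add: cong_int_iff)
qed

context dsetup begin

abbreviation "L2 x \<equiv> Legendre (int x) (int n2)"
abbreviation "L1 x \<equiv> Legendre (int x) (int n1)"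

lemma L_g1: "Legendre (int g1) (int n1) = -1" using Legendre_primroot[OF p1 n1_gt2 r1] .
lemma L_g2: "Legendre (int g2) (int n2) = -1" using Legendre_primroot[OF p2 n2_gt2 r2] .

lemma L2_rep: "L2 ((g^s * \<nu>^t) mod (n1*n2)) = (-1)^s"
proof -
  have "L2 ((g^s * \<nu>^t) mod (n1*n2)) = L2 (g^s * \<nu>^t)" by (rule Legendre_nat_mod) simp
  also have "\<dots> = L2 (g2^s)"
  proof (rule Legendre_cong)
    show "[int (g^s * \<nu>^t) = int (g2^s)] (mod int n2)" using rep_mod2[of s t] by (metis cong_int_iff of_nat_mult of_nat_power)
  qed
  also have "\<dots> = (-1)^s" using Legendre_pow[OF p2 n2_gt2, of "int g2" s] L_g2 by simp
  finally show ?thesis .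
qed

lemma U_L2: "x \<in> U \<Longrightarrow> L2 x \<in> {1,-1}"
  using Legendre_nonzero[OF p2, of x] unfolding U_def by simp

lemma Dset_char:
  assumes "b \<in> {0,1}"
  shows "Dset n1 n2 g \<nu> b = {x \<in> U. L2 x = (if b = 0 then 1 else -1)}"
proof (rule equalityI; rule subsetI)
  fix x assume "x \<in> Dset n1 n2 g \<nu> b"
  then obtain s i where x: "x = (g^(2*s+b) * \<nu>^i) mod (n1*n2)" unfolding Dset_def by blast
  have "L2 x = (-1)^(2*s+b)" unfolding x by (rule L2_rep)
  then show "x \<in> {x \<in> U. L2 x = (if b = 0 then 1 else -1)}" using rep_U x assms by auto
next
  fix x assume x: "x \<in> {x \<in> U. L2 x = (if b = 0 then 1 else -1)}"
  then obtain s t where st: "s < ee n1 n2" "t < dd n1 n2" "x = (g^s * \<nu>^t) mod (n1*n2)"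
    using rep_surj by blast
  have "(-1::int)^s = (if b = 0 then 1 else -1)" using x L2_rep st(3) by simp
  then have sb: "s mod 2 = b" using assms by (cases "even s") (auto simp: odd_iff_mod_2_eq_one)
  have s: "s = 2 * (s div 2) + b" using sb by presburger
  have "s div 2 \<le> (ee n1 n2 - 2) div 2"
  proof -
    obtain k where k: "ee n1 n2 = 2*k" using e_even by (auto elim!: evenE)
    have "(2*k - 2) div 2 = k - 1" by simp
    moreover have "s div 2 < k" using st(1) k by (simp add: div_less_iff_less_mult)
    ultimately show ?thesis using k by simp
  qed
  moreover have "t \<le> dd n1 n2 - 1" using st(2) by simp
  ultimately show "x \<in> Dset n1 n2 g \<nu> b" unfolding Dset_def
    apply (simp only: mem_Collect_eq)
    apply (rule exI[of _ "s div 2"], rule exI[of _ t])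
    using st(3) s by simp
qed

end

lemma Legendre_mult_nat:
  assumes "prime (p::nat)" "2 < p"
  shows "Legendre (int (a*b)) (int p) = Legendre (int a) (int p) * Legendre (int b) (int p)"
  using Legendre_mult[OF assms, of "int a" "int b"] by simp

lemma QR_char:
  assumes "prime p" "b \<in> {0,1}"
  shows "QRset p b = {x. 0 < x \<and> x < p \<and> Legendre (int x) (int p) = (if b = 0 then 1 else -1)}"
proof -
  have "Legendre (int x) (int p) = (if QuadRes (int p) (int x) then 1 else -1)" if "0 < x" "x < p" for x
  proof -
    have "\<not> [int x = 0] (mod int p)"
    proof
      assume "[int x = 0] (mod int p)"
      then have "p dvd x" by (metis cong_0_iff int_dvd_int_iff)
      then show False using that by (simp add: nat_dvd_not_less)
    qed
    then show ?thesis unfolding Legendre_def by simp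
  qed
  then show ?thesis unfolding QRset_def using assms(2) by (auto split: if_splits)
qed

lemma QR_flip:
  assumes "prime p" "2 < p" "b \<in> {0,1}" "coprime a p" "Legendre (int a) (int p) = -1"
    and "x \<in> QRset p b"
  shows "(a * x) mod p \<in> QRset p (1 - b)"
proof -
  have x: "0 < x" "x < p" "Legendre (int x) (int p) = (if b = 0 then 1 else -1)"
    using assms(6) QR_char[OF assms(1,3)] by auto
  have cx: "coprime x p" using x(1,2) assms(1)
    by (metis coprime_commute le_less_trans not_le prime_imp_coprime_nat nat_dvd_not_less)
  have "coprime (a*x) p" using cx assms(4) by simp
  then have "coprime ((a*x) mod p) p" using assms(1) by simp
  then have "(a*x) mod p \<noteq> 0" using assms by (metis coprime_0_left_iff not_prime_unit)
  moreover have "Legendre (int ((a*x) mod p)) (int p) = Legendre (int (a*x)) (int p)"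
    by (rule Legendre_nat_mod) simp
  moreover have "Legendre (int (a*x)) (int p) = - Legendre (int x) (int p)"
    using Legendre_mult_nat[OF assms(1,2)] assms(5) by simp
  moreover have "(a*x) mod p < p" using assms(1) prime_gt_0_nat by simp
  moreover have "1 - b \<in> {0,1}" by auto
  ultimately show ?thesis using QR_char[OF assms(1), of "1-b"] x(3) assms(3) by auto
qed

lemma QR_card:
  assumes "prime p" "2 < p" "residue_primroot p r" "b \<in> {0,1}"
  shows "card (QRset p b) = (p - 1) div 2"
proof -
  have cr: "coprime r p" using assms(3) by (simp add: residue_primroot_def coprime_commute)
  have Lr: "Legendre (int r) (int p) = -1" using Legendre_primroot[OF assms(1-3)] .
  let ?S = "{x. 0 < x \<and> x < p}"
  have un: "QRset p 0 \<union> QRset p 1 = ?S"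
    unfolding QRset_def by auto
  have dj: "QRset p 0 \<inter> QRset p 1 = {}" unfolding QRset_def by auto
  have inj: "inj_on (\<lambda>x. (r*x) mod p) ?S"
  proof (rule inj_onI)
    fix x y assume "x \<in> ?S" "y \<in> ?S" "(r*x) mod p = (r*y) mod p"
    then have "[r*x = r*y] (mod p)" by (simp add: cong_def)
    then have "[x = y] (mod p)" using cr cong_mult_lcancel_nat by (metis coprime_commute)
    then show "x = y" using \<open>x \<in> ?S\<close> \<open>y \<in> ?S\<close> cong_less_modulus_unique_nat by auto
  qed
  have i1: "(\<lambda>x. (r*x) mod p) ` QRset p 0 \<subseteq> QRset p 1"
    using QR_flip[OF assms(1,2) _ cr Lr, of 0] by auto
  have i2: "(\<lambda>x. (r*x) mod p) ` QRset p 1 \<subseteq> QRset p 0"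
    using QR_flip[OF assms(1,2) _ cr Lr, of 1] by auto
  have fS: "finite ?S" by simp
  have cS: "card ?S = p - 1"
  proof -
    have "?S = {0<..<p}" by auto
    then show ?thesis by simp
  qed
  have "card (QRset p 0) = card (QRset p 1)" "2 * card (QRset p 0) = card ?S"
    using flip_card[OF fS un dj inj i1 i2] by auto
  then show ?thesis using assms(4) cS by auto
qed

context dsetup begin

lemma D_flip:
  assumes "b \<in> {0,1}" "coprime a (n1*n2)" "L2 a = -1" "x \<in> Dset n1 n2 g \<nu> b"
  shows "(a * x) mod (n1*n2) \<in> Dset n1 n2 g \<nu> (1 - b)"
proof -
  have x: "x \<in> U" "L2 x = (if b = 0 then 1 else -1)" using assms(4) Dset_char[OF assms(1)] by auto
  have "(a*x) mod (n1*n2) \<in> U"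
    using x(1) assms(2) n1_gt2 n2_gt2 unfolding U_def by (simp del: coprime_mult_right_iff)
  moreover have "L2 ((a*x) mod (n1*n2)) = L2 (a*x)" by (rule Legendre_nat_mod) simp
  moreover have "L2 (a*x) = - L2 x" using Legendre_mult_nat[OF p2 n2_gt2] assms(3) by simp
  moreover have "1 - b \<in> {0,1}" by auto
  ultimately show ?thesis using Dset_char[of "1-b"] x(2) assms(1) by auto
qed

lemma D_un: "Dset n1 n2 g \<nu> 0 \<union> Dset n1 n2 g \<nu> 1 = U"
  using Dset_char[of 0] Dset_char[of 1] U_L2 by auto

lemma D_dj: "Dset n1 n2 g \<nu> 0 \<inter> Dset n1 n2 g \<nu> 1 = {}"
  using Dset_char[of 0] Dset_char[of 1] by auto

lemma D_card:
  assumes "b \<in> {0,1}"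
  shows "2 * card (Dset n1 n2 g \<nu> b) = (n1 - 1) * (n2 - 1)"
proof -
  have inj: "inj_on (\<lambda>x. (g*x) mod (n1*n2)) U"
  proof (rule inj_onI)
    fix x y assume "x \<in> U" "y \<in> U" "(g*x) mod (n1*n2) = (g*y) mod (n1*n2)"
    then have "[g*x = g*y] (mod n1*n2)" by (simp add: cong_def)
    then have "[x = y] (mod n1*n2)" using cop_g cong_mult_lcancel_nat by (metis coprime_commute)
    then show "x = y" using \<open>x \<in> U\<close> \<open>y \<in> U\<close> cong_less_modulus_unique_nat unfolding U_def by auto
  qed
  have Lg: "L2 g = -1" using L_g2 Legendre_cong[of "int g" "int g2" "int n2"] gg2 by (simp add: cong_int_iff)
  have i1: "(\<lambda>x. (g*x) mod (n1*n2)) ` Dset n1 n2 g \<nu> 0 \<subseteq> Dset n1 n2 g \<nu> 1"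
    using D_flip[of 0 g] cop_g Lg by auto
  have i2: "(\<lambda>x. (g*x) mod (n1*n2)) ` Dset n1 n2 g \<nu> 1 \<subseteq> Dset n1 n2 g \<nu> 0"
    using D_flip[of 1 g] cop_g Lg by auto
  have "card (Dset n1 n2 g \<nu> 0) = card (Dset n1 n2 g \<nu> 1)" "2 * card (Dset n1 n2 g \<nu> 0) = card U"
    using flip_card[OF finite_U D_un D_dj inj i1 i2] by auto
  then show ?thesis using assms card_U by auto
qed

end

context dsetup begin

definition Zs :: "nat \<Rightarrow> nat \<Rightarrow> nat \<Rightarrow> nat set" where
  "Zs i j h = Dset n1 n2 g \<nu> i \<union> (\<lambda>k. n2*k) ` QRset n1 j \<union> (\<lambda>k. n1*k) ` QRset n2 h"

lemma QR_range: "x \<in> QRset p b \<Longrightarrow> 0 < x \<and> x < p" unfolding QRset_def by auto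

lemma Z_range:
  assumes "i \<in> {0,1}" "x \<in> Zs i j h"
  shows "0 < x \<and> x < n1*n2"
proof -
  have n: "n1*n2 > 1" using n1_gt2 n2_gt2 by (simp add: one_less_mult)
  consider (D) "x \<in> Dset n1 n2 g \<nu> i" | (A) k where "k \<in> QRset n1 j" "x = n2*k"
    | (B) k where "k \<in> QRset n2 h" "x = n1*k"
    using assms(2) unfolding Zs_def by auto
  then show ?thesis
  proof cases
    case D
    then have "x \<in> U" using Dset_char[OF assms(1)] by auto
    then have "x < n1*n2" "coprime x (n1*n2)" unfolding U_def by auto
    moreover have "x \<noteq> 0" using calculation(2) n by (cases "x = 0") auto
    ultimately show ?thesis by simp
  next
    case (A k) then show ?thesis using QR_range[OF A(1)] n2_gt2 by (simp add: mult.commute)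
  next
    case (B k) then show ?thesis using QR_range[OF B(1)] n1_gt2 by simp
  qed
qed

lemma Z_card:
  assumes "i \<in> {0,1}" "j \<in> {0,1}" "h \<in> {0,1}"
  shows "2 * card (Zs i j h) + 1 = n1 * n2"
proof -
  let ?D = "Dset n1 n2 g \<nu> i" and ?A = "(\<lambda>k. n2*k) ` QRset n1 j" and ?B = "(\<lambda>k. n1*k) ` QRset n2 h"
  have fD: "finite ?D" using D_un finite_U by (metis finite_Un assms(1) insertE singletonD)
  have fA: "finite ?A" "finite ?B" unfolding QRset_def by auto
  have cA: "card ?A = card (QRset n1 j)" by (rule card_image) (use n2_gt2 in \<open>simp add: inj_on_def\<close>)
  have cB: "card ?B = card (QRset n2 h)" by (rule card_image) (use n1_gt2 in \<open>simp add: inj_on_def\<close>)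
  have DA: "?D \<inter> (?A \<union> ?B) = {}"
  proof -
    have "\<not> coprime x (n1*n2)" if "x \<in> ?A \<union> ?B" for x
      using that p1 p2 by (auto simp: QRset_def)
    moreover have "coprime x (n1*n2)" if "x \<in> ?D" for x
      using that Dset_char[OF assms(1)] unfolding U_def by auto
    ultimately show ?thesis by blast
  qed
  have AB: "?A \<inter> ?B = {}"
  proof -
    have False if "k \<in> QRset n1 j" "k' \<in> QRset n2 h" "n2*k = n1*k'" for k k'
    proof -
      have "n1 dvd n2 * k" using that(3) by simp
      then have "n1 dvd k" using cop12 by (simp add: coprime_dvd_mult_right_iff)
      then show False using QR_range[OF that(1)] by (simp add: nat_dvd_not_less)
    qed
    then show ?thesis by blast
  qed
  have "card (Zs i j h) = card ?D + (card ?A + card ?B)"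
  proof -
    have "card (?A \<union> ?B) = card ?A + card ?B" using card_Un_disjoint[OF fA(1) fA(2) AB] .
    moreover have "card (?D \<union> (?A \<union> ?B)) = card ?D + card (?A \<union> ?B)"
      using card_Un_disjoint[OF fD _ DA] fA by simp
    ultimately show ?thesis unfolding Zs_def by (simp add: Un_assoc)
  qed
  moreover obtain a where a: "n1 = 2*a + 1" using o1 oddE by blast
  moreover obtain b where b: "n2 = 2*b + 1" using o2 oddE by blast
  moreover have "2 * card ?D = (2*a) * (2*b)" using D_card[OF assms(1)] a b by simp
  then have "card ?D = 2*a*b" by simp
  moreover have "card (QRset n1 j) = a" using QR_card[OF p1 n1_gt2 r1 assms(2)] a by simp
  moreover have "card (QRset n2 h) = b" using QR_card[OF p2 n2_gt2 r2 assms(3)] b by simp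
  ultimately have "card (Zs i j h) = 2*a*b + a + b" "n1*n2 = (2*a+1)*(2*b+1)" using cA cB by simp_all
  then show ?thesis by (simp add: algebra_simps)
qed

lemma Z_mult:
  assumes "i \<in> {0,1}" "j \<in> {0,1}" "h \<in> {0,1}"
    and a: "coprime a (n1*n2)" "L1 a = -1" "L2 a = -1"
    and x: "0 < x" "x < n1*n2"
  shows "x \<in> Zs i j h \<or> (a*x) mod (n1*n2) \<in> Zs i j h"
proof (cases "coprime x (n1*n2)")
  case True
  then have "x \<in> U" unfolding U_def using x by simp
  then have "x \<in> Dset n1 n2 g \<nu> i \<or> x \<in> Dset n1 n2 g \<nu> (1 - i)" using D_un assms(1) by auto
  moreover have "(a*x) mod (n1*n2) \<in> Dset n1 n2 g \<nu> i" if "x \<in> Dset n1 n2 g \<nu> (1 - i)"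
    using D_flip[of "1 - i" a x, OF _ a(1) a(3) that] assms(1) by auto
  ultimately show ?thesis unfolding Zs_def by blast
next
  case False
  then have "n1 dvd x \<or> n2 dvd x" using p1 p2
    by (metis coprime_commute coprime_mult_right_iff prime_imp_coprime_nat)
  then show ?thesis
  proof
    assume "n2 dvd x"
    then obtain k where k: "x = n2 * k" by blast
    have k0: "0 < k" "k < n1" using x k by (auto simp: mult.commute)
    then have "k \<in> QRset n1 j \<or> k \<in> QRset n1 (1 - j)" unfolding QRset_def using assms(2) by auto
    moreover have "(a*x) mod (n1*n2) \<in> (\<lambda>k. n2*k) ` QRset n1 j" if "k \<in> QRset n1 (1 - j)"
    proof -
      have ca: "coprime a n1" using a(1) by simp
      have "(a*k) mod n1 \<in> QRset n1 (1 - (1 - j))" using QR_flip[OF p1 n1_gt2 _ ca a(2) that] assms(2) by auto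
      moreover have "(a*x) mod (n1*n2) = n2 * ((a*k) mod n1)"
        unfolding k by (metis mult.commute mult.left_commute mod_mult_mult1)
      ultimately show ?thesis using assms(2) by auto
    qed
    ultimately show ?thesis unfolding Zs_def using k by blast
  next
    assume "n1 dvd x"
    then obtain k where k: "x = n1 * k" by blast
    have k0: "0 < k" "k < n2" using x k by auto
    then have "k \<in> QRset n2 h \<or> k \<in> QRset n2 (1 - h)" unfolding QRset_def using assms(3) by auto
    moreover have "(a*x) mod (n1*n2) \<in> (\<lambda>k. n1*k) ` QRset n2 h" if "k \<in> QRset n2 (1 - h)"
    proof -
      have ca: "coprime a n2" using a(1) by simp
      have "(a*k) mod n2 \<in> QRset n2 (1 - (1 - h))" using QR_flip[OF p2 n2_gt2 _ ca a(3) that] assms(3) by auto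
      moreover have "(a*x) mod (n1*n2) = n1 * ((a*k) mod n2)"
        unfolding k by (metis mult.left_commute mod_mult_mult1)
      ultimately show ?thesis using assms(3) by auto
    qed
    ultimately show ?thesis unfolding Zs_def using k by blast
  qed
qed

end

locale fhom =
  fixes f :: "'a::field \<Rightarrow> 'b::field"
  assumes finj: "inj f" and f0: "f 0 = 0" and f1: "f 1 = 1"
    and fadd: "\<And>x y. f (x + y) = f x + f y" and fmult: "\<And>x y. f (x * y) = f x * f y"
begin

lemma f_neg: "f (- x) = - f x"
proof -
  have "f (- x) + f x = 0" using fadd[of "-x" x] f0 by simp
  then show ?thesis by (simp add: eq_neg_iff_add_eq_0)
qed

lemma f_diff: "f (x - y) = f x - f y"
  using fadd[of x "-y"] f_neg by simp

lemma f_sum: "f (sum g A) = sum (\<lambda>x. f (g x)) A"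
  by (induction A rule: infinite_finite_induct) (auto simp: f0 fadd)

lemma f_pow: "f (x ^ k) = f x ^ k"
  by (induction k) (auto simp: f1 fmult)

lemma f_eq0: "f x = 0 \<longleftrightarrow> x = 0"
  using finj f0 by (metis injD)

lemma coeff_map: "coeff (map_poly f p) i = f (coeff p i)"
  by (simp add: coeff_map_poly f0)

lemma map_add: "map_poly f (p + q) = map_poly f p + map_poly f q"
  by (rule poly_eqI) (simp add: coeff_map fadd)

lemma map_diff: "map_poly f (p - q) = map_poly f p - map_poly f q"
  by (rule poly_eqI) (simp add: coeff_map f_diff)

lemma map_mult: "map_poly f (p * q) = map_poly f p * map_poly f q"
  by (rule poly_eqI) (simp add: coeff_map coeff_mult f_sum fmult)

lemma map_smult: "map_poly f (smult c p) = smult (f c) (map_poly f p)"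
  by (rule poly_eqI) (simp add: coeff_map fmult)

lemma map_monom: "map_poly f (monom c k) = monom (f c) k"
  by (simp add: map_poly_monom f0)

lemma map_one: "map_poly f 1 = 1" by (simp add: f1)

lemma map_sum: "map_poly f (sum g A) = sum (\<lambda>x. map_poly f (g x)) A"
  by (induction A rule: infinite_finite_induct) (auto simp: map_add)

lemma map_eq0: "map_poly f p = 0 \<longleftrightarrow> p = 0"
proof
  assume "map_poly f p = 0"
  then have "\<forall>i. coeff p i = 0" by (metis coeff_map coeff_0 f_eq0)
  then show "p = 0" by (simp add: poly_eqI)
qed simp

lemma degree_map: "degree (map_poly f p) = degree p"
  by (rule degree_map_poly) (simp add: f_eq0)

lemma poly_map: "poly (map_poly f p) (f x) = f (poly p x)"
  by (simp add: poly_altdef degree_map coeff_map f_sum fmult f_pow)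

lemma map_mod: "map_poly f (p mod q) = map_poly f p mod map_poly f q"
proof (cases "q = 0")
  case True then show ?thesis by simp
next
  case False
  have e: "map_poly f p = map_poly f (p mod q) + map_poly f (p div q) * map_poly f q"
    by (metis map_add map_mult div_mult_mod_eq add.commute)
  have "map_poly f p mod map_poly f q = map_poly f (p mod q) mod map_poly f q"
    unfolding e by (simp add: mod_mult_self1)
  also have "\<dots> = map_poly f (p mod q)"
  proof (cases "p mod q = 0")
    case True then show ?thesis by simp
  next
    case F: False
    have "degree (p mod q) < degree q" using degree_mod_less[OF False, of p] F by simp
    then show ?thesis by (intro mod_poly_less) (simp add: degree_map)
  qed
  finally show ?thesis by simp
qed

lemma map_dvd_iff: "map_poly f q dvd map_poly f p \<longleftrightarrow> q dvd p"
proof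
  assume "map_poly f q dvd map_poly f p"
  then have "map_poly f p mod map_poly f q = 0" by simp
  then have "map_poly f (p mod q) = 0" by (simp add: map_mod)
  then have "p mod q = 0" by (simp add: map_eq0)
  then show "q dvd p" by (simp add: mod_eq_0_iff_dvd)
next
  assume "q dvd p" then obtain r where "p = q * r" by blast
  then show "map_poly f q dvd map_poly f p" by (simp add: map_mult)
qed

end

lemma roots_prod_dvd:
  fixes p :: "'b::field poly"
  assumes "finite S" "inj_on \<zeta> S" "\<And>k. k \<in> S \<Longrightarrow> poly p (\<zeta> k) = 0"
  shows "(\<Prod>k\<in>S. [:- \<zeta> k, 1:]) dvd p"
  using assms
proof (induction S arbitrary: p rule: finite_induct)
  case empty then show ?case by simp
next
  case (insert a S)
  have "[:- \<zeta> a, 1:] dvd p" using insert.prems(2) poly_eq_0_iff_dvd by blast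
  then obtain r where r: "p = [:- \<zeta> a, 1:] * r" by blast
  have "poly r (\<zeta> k) = 0" if "k \<in> S" for k
  proof -
    have "\<zeta> k \<noteq> \<zeta> a" using insert.prems(1) that insert.hyps(2) by (auto simp: inj_on_def)
    moreover have "poly p (\<zeta> k) = 0" using insert.prems(2) that by simp
    ultimately show ?thesis unfolding r by simp
  qed
  then have "(\<Prod>k\<in>S. [:- \<zeta> k, 1:]) dvd r"
    using insert.IH insert.prems(1) by (simp add: inj_on_insert)
  then have "[:- \<zeta> a, 1:] * (\<Prod>k\<in>S. [:- \<zeta> k, 1:]) dvd p" unfolding r by (rule mult_dvd_mono[OF dvd_refl])
  then show ?case using insert.hyps by simp
qed

lemma degree_linprod:
  fixes \<zeta> :: "nat \<Rightarrow> 'b::field"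
  assumes "finite S"
  shows "degree (\<Prod>k\<in>S. [:- \<zeta> k, 1:]) = card S"
  using degree_prod_sum_eq[of S "\<lambda>k. [:- \<zeta> k, 1:]"] by simp

lemma linprod_nz: "(\<Prod>k\<in>S. [:- (\<zeta> k::'b::field), 1:]) \<noteq> 0"
proof (cases "finite S")
  case True
  have "\<forall>k\<in>S. [:- (\<zeta> k::'b), 1:] \<noteq> 0" by simp
  then show ?thesis using prod_zero_iff[OF True, of "\<lambda>k. [:- \<zeta> k, 1:]"] by blast
qed simp

definition twist :: "nat \<Rightarrow> nat \<Rightarrow> 'a::field poly \<Rightarrow> 'a poly" where
  "twist n a c = (\<Sum>k<n. monom (coeff c k) ((a*k) mod n))"

definition supp :: "nat \<Rightarrow> 'a::zero poly \<Rightarrow> nat set" where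
  "supp n p = {i. i < n \<and> coeff p i \<noteq> 0}"

lemma hweight_supp: "hweight n p = card (supp n p)"
  unfolding hweight_def supp_def ..

lemma finite_supp: "finite (supp n p)" unfolding supp_def by simp

lemma poly_lt: "degree (p::'a::field poly) < n \<Longrightarrow> poly p x = (\<Sum>i<n. coeff p i * x ^ i)"
proof -
  assume d: "degree p < n"
  have "poly p x = (\<Sum>i\<le>degree p. coeff p i * x ^ i)" by (rule poly_altdef)
  also have "\<dots> = (\<Sum>i<n. coeff p i * x ^ i)"
    by (rule sum.mono_neutral_left) (use d in \<open>auto simp: coeff_eq_0\<close>)
  finally show ?thesis .
qed

lemma X_dvd_pow: "(monom (1::'a::field) n - 1) dvd (monom 1 (n*k) - 1)"
proof (induction k)
  case 0 then show ?case by simp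
next
  case (Suc k)
  have m: "monom (1::'a) (n * Suc k) = monom 1 n * monom 1 (n*k)"
    by (simp add: mult_monom)
  have eq: "monom (1::'a) (n * Suc k) - 1 = monom 1 n * (monom 1 (n*k) - 1) + (monom 1 n - 1)"
    unfolding m by (simp add: algebra_simps)
  have dv: "monom (1::'a) n - 1 dvd monom 1 n * (monom 1 (n*k) - 1) + (monom 1 n - 1)"
    using Suc by (intro dvd_add dvd_mult) simp_all
  show ?case unfolding eq by (rule dv)
qed

lemma X_dvd_monom_diff: "(monom (1::'a::field) n - 1) dvd (monom 1 m - monom 1 (m mod n))"
proof -
  have "monom (1::'a) m - monom 1 (m mod n) = monom 1 (m mod n) * (monom 1 (n * (m div n)) - 1)"
  proof -
    have "m = m mod n + n * (m div n)" by simp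
    then have "monom (1::'a) m = monom 1 (m mod n) * monom 1 (n * (m div n))"
      by (metis mult_monom mult_1)
    then show ?thesis by (simp add: algebra_simps)
  qed
  then show ?thesis using X_dvd_pow by (metis dvd_mult)
qed

lemma mod_X_formula:
  fixes p :: "'a::field poly"
  assumes "n > 0"
  shows "p mod (monom 1 n - 1) = (\<Sum>m\<le>degree p. monom (coeff p m) (m mod n))"
proof -
  let ?X = "monom (1::'a) n - 1"
  let ?T = "\<Sum>m\<le>degree p. monom (coeff p m) (m mod n)"
  have "p - ?T = (\<Sum>m\<le>degree p. monom (coeff p m) m - monom (coeff p m) (m mod n))"
    by (simp add: sum_subtractf poly_as_sum_of_monoms)
  also have "\<dots> = (\<Sum>m\<le>degree p. smult (coeff p m) (monom 1 m - monom 1 (m mod n)))"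
    by (simp add: smult_monom smult_diff_right)
  finally have dv: "?X dvd p - ?T"
    by (metis (no_types, lifting) X_dvd_monom_diff dvd_smult dvd_sum)
  have dT: "degree ?T \<le> n - 1"
  proof (rule degree_le, intro allI impI)
    fix i assume "n - 1 < i"
    have "m mod n \<noteq> i" for m using mod_less_divisor[OF assms, of m] \<open>n - 1 < i\<close> by linarith
    then have "\<forall>m. m mod n \<noteq> i" by blast
    then show "coeff ?T i = 0" by (simp add: coeff_sum coeff_monom)
  qed
  have dX: "degree ?X = n"
  proof -
    have "degree (monom (1::'a) n + (-1)) = n" using assms by (subst degree_add_eq_left) (simp_all add: degree_monom_eq)
    then show ?thesis by simp
  qed
  have "p mod ?X = (?T + (p - ?T)) mod ?X" by simp
  also have "\<dots> = ?T mod ?X"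
  proof -
    obtain k where "p - ?T = ?X * k" using dv by blast
    then show ?thesis by (simp only: mod_mult_self2)
  qed
  also have "\<dots> = ?T" using dT dX assms by (intro mod_poly_less) simp
  finally show ?thesis .
qed

lemma coeff_mod_X:
  fixes p :: "'a::field poly"
  assumes "n > 0" "coeff (p mod (monom 1 n - 1)) k \<noteq> 0"
  shows "\<exists>m. coeff p m \<noteq> 0 \<and> m mod n = k"
proof -
  have "(\<Sum>m\<le>degree p. coeff (monom (coeff p m) (m mod n)) k) \<noteq> 0"
    using assms by (simp add: mod_X_formula coeff_sum)
  then obtain m where "coeff (monom (coeff p m) (m mod n)) k \<noteq> 0" by (meson sum.neutral)
  then show ?thesis by (auto simp: coeff_monom split: if_splits)
qed

lemma coeff_mult_nz:
  fixes p q :: "'a::field poly"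
  assumes "coeff (p * q) m \<noteq> 0"
  shows "\<exists>i j. m = i + j \<and> coeff p i \<noteq> 0 \<and> coeff q j \<noteq> 0"
proof -
  from assms obtain i where "i \<le> m" "coeff p i * coeff q (m - i) \<noteq> 0"
    unfolding coeff_mult by (meson sum.neutral atMost_iff)
  then show ?thesis by (intro exI[of _ i] exI[of _ "m - i"]) auto
qed

lemma coeff_twist_nz:
  assumes "coeff (twist n a c) m \<noteq> 0"
  shows "\<exists>k<n. coeff c k \<noteq> 0 \<and> (a*k) mod n = m"
proof -
  have "(\<Sum>k<n. coeff (monom (coeff c k) ((a*k) mod n)) m) \<noteq> 0"
    using assms by (simp add: twist_def coeff_sum)
  then obtain k where "k < n" "coeff (monom (coeff c k) ((a*k) mod n)) m \<noteq> 0"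
    by (meson sum.neutral lessThan_iff)
  then show ?thesis by (auto simp: coeff_monom split: if_splits)
qed

lemma supp_prod:
  fixes c :: "'a::field poly"
  assumes "n > 0" "degree c < n"
  shows "supp n (c * twist n a c mod (monom 1 n - 1))
           \<subseteq> (\<lambda>(i,k). (i + (a*k) mod n) mod n) ` (supp n c \<times> supp n c)"
proof
  fix x assume "x \<in> supp n (c * twist n a c mod (monom 1 n - 1))"
  then have x: "x < n" "coeff (c * twist n a c mod (monom 1 n - 1)) x \<noteq> 0" unfolding supp_def by auto
  obtain m where m: "coeff (c * twist n a c) m \<noteq> 0" "m mod n = x" using coeff_mod_X[OF assms(1) x(2)] by blast
  obtain i j where ij: "m = i + j" "coeff c i \<noteq> 0" "coeff (twist n a c) j \<noteq> 0"
    using coeff_mult_nz[OF m(1)] by blast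
  obtain k where k: "k < n" "coeff c k \<noteq> 0" "(a*k) mod n = j" using coeff_twist_nz[OF ij(3)] by blast
  have "i < n" using ij(2) assms(2) by (metis le_degree le_less_trans)
  then have "(i, k) \<in> supp n c \<times> supp n c" using ij(2) k unfolding supp_def by auto
  moreover have "x = (i + (a*k) mod n) mod n" using m(2) ij(1) k(3) by simp
  ultimately show "x \<in> (\<lambda>(i,k). (i + (a*k) mod n) mod n) ` (supp n c \<times> supp n c)" by force
qed

lemma weight_bound:
  fixes c :: "'a::field poly"
  assumes "n > 0" "degree c < n"
  shows "hweight n (c * twist n a c mod (monom 1 n - 1)) \<le> hweight n c * hweight n c"
proof -
  have "hweight n (c * twist n a c mod (monom 1 n - 1))
      \<le> card ((\<lambda>(i,k). (i + (a*k) mod n) mod n) ` (supp n c \<times> supp n c))"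
    unfolding hweight_supp by (rule card_mono[OF _ supp_prod[OF assms]]) (simp add: finite_supp)
  also have "\<dots> \<le> card (supp n c \<times> supp n c)" by (rule card_image_le) (simp add: finite_supp)
  finally show ?thesis by (simp add: card_cartesian_product hweight_supp)
qed

lemma weight_bound_diag:
  fixes c :: "'a::field poly"
  assumes "n > 0" "degree c < n" and diag: "\<And>k. (k + (a*k) mod n) mod n = 0"
  shows "hweight n (c * twist n a c mod (monom 1 n - 1)) + hweight n c \<le> hweight n c * hweight n c + 1"
proof -
  let ?S = "supp n c" let ?h = "\<lambda>(i,k). (i + (a*k) mod n) mod n"
  let ?D = "(\<lambda>i. (i,i)) ` ?S"
  let ?O = "(?S \<times> ?S) - ?D"
  have fS: "finite ?S" by (rule finite_supp)
  have sub: "?h ` (?S \<times> ?S) \<subseteq> insert 0 (?h ` ?O)"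
  proof
    fix y assume "y \<in> ?h ` (?S \<times> ?S)"
    then obtain i k where ik: "i \<in> ?S" "k \<in> ?S" "y = ?h (i,k)" by auto
    show "y \<in> insert 0 (?h ` ?O)"
    proof (cases "i = k")
      case True then show ?thesis using diag[of i] ik by simp
    next
      case False then have "(i,k) \<in> ?O" using ik by auto
      then show ?thesis using ik by blast
    qed
  qed
  have cD: "card ?D = card ?S" by (rule card_image) (simp add: inj_on_def)
  have cO: "card ?O = card ?S * card ?S - card ?S"
    using card_Diff_subset[of ?D "?S \<times> ?S"] fS cD by (auto simp: card_cartesian_product)
  have fO: "finite ?O" using fS by simp
  have "hweight n (c * twist n a c mod (monom 1 n - 1)) \<le> card (?h ` (?S \<times> ?S))"
    unfolding hweight_supp by (rule card_mono[OF _ supp_prod[OF assms(1,2)]]) (simp add: fS)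
  also have "\<dots> \<le> card (insert 0 (?h ` ?O))" by (rule card_mono[OF _ sub]) (simp add: fO)
  also have "\<dots> \<le> Suc (card (?h ` ?O))" by (rule card_insert_le_m1) simp_all
  also have "\<dots> \<le> Suc (card ?O)" using card_image_le[OF fO] by simp
  finally have "hweight n (c * twist n a c mod (monom 1 n - 1)) \<le> Suc (card ?S * card ?S - card ?S)"
    using cO by simp
  moreover have "card ?S \<le> card ?S * card ?S" by (cases "card ?S") auto
  ultimately show ?thesis unfolding hweight_supp by linarith
qed

lemma vs_poly: "vector_space (smult :: 'a::field \<Rightarrow> 'a poly \<Rightarrow> 'a poly)"
  by unfold_locales (simp_all add: smult_add_right smult_add_left)

locale code = fhom f for f :: "'a::field \<Rightarrow> 'b::field" +
  fixes n :: nat and \<theta> :: 'b and Z :: "nat set" and gp :: "'a poly"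
  assumes n1: "n > 1" and th_n: "\<theta> ^ n = 1" and th_prim: "\<And>k. 0 < k \<Longrightarrow> k < n \<Longrightarrow> \<theta> ^ k \<noteq> 1"
    and Zr: "\<And>x. x \<in> Z \<Longrightarrow> 0 < x \<and> x < n"
    and gmap: "map_poly f gp = (\<Prod>k\<in>Z. [:- (\<theta> ^ k), 1:])"
begin

abbreviation "X \<equiv> (monom 1 n - 1 :: 'a poly)"
abbreviation "P \<equiv> (\<Prod>k\<in>Z. [:- (\<theta> ^ k), 1:])"

lemma n0: "n > 0" using n1 by simp

lemma th_nz: "\<theta> \<noteq> 0"
proof
  assume "\<theta> = 0"
  then have "\<theta> ^ n = 0" using n0 by (simp add: power_0_left)
  then show False using th_n by simp
qed

lemma th_mod: "\<theta> ^ m = \<theta> ^ (m mod n)"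
proof -
  have "\<theta> ^ m = \<theta> ^ (n * (m div n) + m mod n)" by simp
  also have "\<dots> = (\<theta>^n)^(m div n) * \<theta> ^ (m mod n)" by (simp only: power_add power_mult)
  finally show ?thesis using th_n by simp
qed

lemma th_inj: "inj_on (\<lambda>k. \<theta> ^ k) {..<n}"
proof (rule inj_onI)
  have main: "k = l" if "k \<le> l" "l < n" "\<theta>^k = \<theta>^l" for k l
  proof (rule ccontr)
    assume "k \<noteq> l"
    then have "0 < l - k" "l - k < n" using that by auto
    moreover have "\<theta>^l = \<theta>^k * \<theta>^(l - k)" using that(1) by (simp add: power_add[symmetric])
    then have "\<theta>^(l-k) = 1" using that(3) th_nz by simp
    ultimately show False using th_prim by blast
  qed
  fix k l assume "k \<in> {..<n}" "l \<in> {..<n}" "\<theta>^k = \<theta>^l"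
  then show "k = l" using main[of k l] main[of l k] by (cases "k \<le> l") auto
qed

lemma finZ: "finite Z" by (rule finite_subset[of Z "{..<n}"]) (use Zr in auto)

lemma injZ: "inj_on (\<lambda>k. \<theta> ^ k) Z"
  using th_inj by (rule inj_on_subset) (use Zr in auto)

lemma poly_P_zero: "k \<in> Z \<Longrightarrow> poly P (\<theta> ^ k) = 0"
  using finZ by (simp add: poly_prod prod_zero_iff) (metis right_minus_eq)

lemma gp_dvd_iff: "gp dvd c \<longleftrightarrow> (\<forall>k\<in>Z. poly (map_poly f c) (\<theta> ^ k) = 0)"
proof
  assume "gp dvd c"
  then obtain q where "c = gp * q" by blast
  then have "map_poly f c = P * map_poly f q" by (simp add: map_mult gmap)
  then show "\<forall>k\<in>Z. poly (map_poly f c) (\<theta> ^ k) = 0" using poly_P_zero by simp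
next
  assume "\<forall>k\<in>Z. poly (map_poly f c) (\<theta> ^ k) = 0"
  then have "P dvd map_poly f c" using roots_prod_dvd[OF finZ injZ] by blast
  then show "gp dvd c" unfolding gmap[symmetric] map_dvd_iff .
qed

lemma map_X: "map_poly f X = monom 1 n - 1" by (simp add: map_diff map_monom f1)

lemma poly_mapX: "poly (map_poly f X) (\<theta>^j) = 0"
proof -
  have "(\<theta>^j)^n = 1" by (metis power_mult power_mult_distrib th_n power_one mult.commute power_mult)
  then show ?thesis by (simp add: map_X poly_monom)
qed

lemma gp_dvd_X: "gp dvd X" using gp_dvd_iff poly_mapX by blast

lemma degX: "degree X = n"
proof -
  have "degree (monom (1::'a) n + (-1)) = n" using n0 by (subst degree_add_eq_left) (simp_all add: degree_monom_eq)
  then show ?thesis by simp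
qed

lemma X_nz: "X \<noteq> 0" using degX n0 by auto

lemma deg_gp: "degree gp = card Z"
  using degree_map[of gp] gmap degree_linprod[OF finZ, of "\<lambda>k. \<theta>^k"] by simp

lemma gp_nz: "gp \<noteq> 0" using gmap linprod_nz map_eq0 by metis

lemma card_Z_lt: "card Z < n"
proof -
  have "Z \<subseteq> {1..<n}" using Zr by (auto simp: Suc_le_eq)
  then have "card Z \<le> n - 1" using card_mono[of "{1..<n}" Z] by simp
  then show ?thesis using n0 by simp
qed

definition "m = n - degree gp"

lemma m_pos: "m > 0" unfolding m_def deg_gp using card_Z_lt by simp

lemma C_char: "cyclic_code n gp = {b * gp | b. degree b < m}"
proof (intro equalityI subsetI)
  obtain H where H: "X = gp * H" using gp_dvd_X by blast
  have H0: "H \<noteq> 0" using H X_nz by auto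
  have dH: "degree H = m" unfolding m_def using H degX gp_nz H0 by (simp add: degree_mult_eq)
  fix c assume "c \<in> cyclic_code n gp"
  then obtain a where c: "c = (a * gp) mod X" unfolding cyclic_code_def by blast
  have "a * gp = (a mod H) * gp + X * (a div H)"
    by (metis H div_mult_mod_eq distrib_right mult.commute mult.left_commute add.commute)
  then have "c = ((a mod H) * gp) mod X" unfolding c by (metis mod_mult_self2)
  also have "\<dots> = (a mod H) * gp"
  proof (cases "a mod H = 0")
    case False
    then have "degree (a mod H) < degree H" using degree_mod_less[OF H0, of a] by simp
    then have "degree ((a mod H) * gp) < degree X" using False gp_nz H0 H by (simp add: degree_mult_eq)
    then show ?thesis by (rule mod_poly_less)
  qed simp
  finally have "c = (a mod H) * gp" .
  moreover have "degree (a mod H) < m"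
    using degree_mod_less[OF H0, of a] dH m_pos by auto
  ultimately show "c \<in> {b * gp | b. degree b < m}" by blast
next
  fix c assume "c \<in> {b * gp | b. degree b < m}"
  then obtain b where b: "c = b * gp" "degree b < m" by blast
  have "(b * gp) mod X = b * gp"
  proof (cases "b = 0")
    case False
    then have "degree (b * gp) < degree X" using b(2) gp_nz unfolding degX m_def
      by (simp add: degree_mult_eq)
    then show ?thesis by (rule mod_poly_less)
  qed simp
  then show "c \<in> cyclic_code n gp" unfolding cyclic_code_def b by (metis (mono_tags, lifting) mem_Collect_eq)
qed

lemma C_deg: "c \<in> cyclic_code n gp \<Longrightarrow> degree c < n"
proof -
  assume "c \<in> cyclic_code n gp"
  then obtain a where c: "c = (a * gp) mod X" unfolding cyclic_code_def by blast
  show ?thesis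
  proof (cases "c = 0")
    case True then show ?thesis using n0 by simp
  next
    case False then show ?thesis using degree_mod_less[OF X_nz, of "a * gp"] c degX by simp
  qed
qed

lemma C_roots: "c \<in> cyclic_code n gp \<Longrightarrow> k \<in> Z \<Longrightarrow> poly (map_poly f c) (\<theta>^k) = 0"
proof -
  assume "c \<in> cyclic_code n gp" "k \<in> Z"
  then obtain b where "c = b * gp" using C_char by auto
  then have "gp dvd c" by simp
  then show ?thesis using gp_dvd_iff \<open>k \<in> Z\<close> by blast
qed

end

interpretation pv: vector_space "smult :: 'a::field \<Rightarrow> 'a poly \<Rightarrow> 'a poly" by (rule vs_poly)

context code begin

lemma code_dim_eq: "code_dim (cyclic_code n gp) = m"
proof -
  let ?B = "(\<lambda>k. monom 1 k * gp) ` {..<m}"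
  have inj: "inj_on (\<lambda>k. monom (1::'a) k * gp) {..<m}"
  proof (rule inj_onI)
    fix k l assume "monom (1::'a) k * gp = monom 1 l * gp"
    then have "monom (1::'a) k = monom 1 l" using gp_nz by simp
    then show "k = l" by (metis degree_monom_eq one_neq_zero)
  qed
  have cB: "card ?B = m" using card_image[OF inj] by simp
  have sub: "?B \<subseteq> cyclic_code n gp" unfolding C_char by (auto simp: degree_monom_eq)
  have span: "cyclic_code n gp \<subseteq> pv.span ?B"
  proof
    fix c assume "c \<in> cyclic_code n gp"
    then obtain b where b: "c = b * gp" "degree b < m" unfolding C_char by blast
    have "b = (\<Sum>k\<le>degree b. monom (coeff b k) k)" by (simp add: poly_as_sum_of_monoms)
    also have "\<dots> = (\<Sum>k<m. monom (coeff b k) k)"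
      by (rule sum.mono_neutral_left) (use b(2) in \<open>auto simp: coeff_eq_0\<close>)
    finally have bb: "b = (\<Sum>k<m. monom (coeff b k) k)" .
    have e: "smult (coeff b k) (monom 1 k * gp) = monom (coeff b k) k * gp" for k
      by (metis mult_smult_left smult_monom mult.right_neutral)
    have "c = (\<Sum>k<m. monom (coeff b k) k) * gp" using b(1) bb by simp
    also have "\<dots> = (\<Sum>k<m. smult (coeff b k) (monom 1 k * gp))"
      unfolding e by (simp add: sum_distrib_right)
    finally have "c = (\<Sum>k<m. smult (coeff b k) (monom 1 k * gp))" .
    also have "\<dots> \<in> pv.span ?B"
      by (intro pv.span_sum pv.span_scale pv.span_base) auto
    finally show "c \<in> pv.span ?B" .
  qed
  have ind: "pv.independent ?B"
  proof (rule pv.independent_if_scalars_zero)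
    show "finite ?B" by simp
    fix u x assume s: "(\<Sum>x\<in>?B. smult (u x) x) = 0" and x: "x \<in> ?B"
    have "(\<Sum>x\<in>?B. smult (u x) x) = (\<Sum>k<m. smult (u (monom 1 k * gp)) (monom 1 k * gp))"
      by (rule sum.reindex[OF inj, unfolded comp_def])
    also have "\<dots> = (\<Sum>k<m. monom (u (monom 1 k * gp)) k) * gp"
      unfolding sum_distrib_right by (rule sum.cong[OF refl]) (metis mult_smult_left smult_monom mult.right_neutral)
    finally have "(\<Sum>k<m. monom (u (monom 1 k * gp)) k) = 0" using s gp_nz by simp
    then have "coeff (\<Sum>k<m. monom (u (monom 1 k * gp)) k) j = 0" for j by simp
    then have z0: "(if j < m then u (monom 1 j * gp) else 0) = 0" for j by (simp add: coeff_sum coeff_monom)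
    have z: "j < m \<Longrightarrow> u (monom 1 j * gp) = 0" for j using z0[of j] by simp
    from x obtain j where "j < m" "x = monom 1 j * gp" by auto
    then show "u x = 0" using z by simp
  qed
  have "card ?B = pv.dim (cyclic_code n gp)" by (rule pv.basis_card_eq_dim[OF sub span ind])
  then show ?thesis unfolding code_dim_def cB by simp
qed

end

context code begin

lemma th_mult: "\<theta> ^ ((x mod n) * y) = \<theta> ^ (x * y)"
  by (metis th_mod mod_mult_left_eq)

lemma poly_map_lt: "degree c < n \<Longrightarrow> poly (map_poly f c) w = (\<Sum>k<n. f (coeff c k) * w ^ k)"
  using poly_lt[of "map_poly f c" n w] by (simp add: degree_map coeff_map)

lemma poly_twist: "degree c < n \<Longrightarrow>
   poly (map_poly f (twist n a c)) (\<theta>^j) = poly (map_poly f c) (\<theta>^((a*j) mod n))"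
proof -
  assume d: "degree c < n"
  have "poly (map_poly f (twist n a c)) (\<theta>^j) = (\<Sum>k<n. f (coeff c k) * (\<theta>^j)^((a*k) mod n))"
    unfolding twist_def by (simp add: map_sum map_monom poly_sum poly_monom)
  also have "\<dots> = (\<Sum>k<n. f (coeff c k) * (\<theta>^((a*j) mod n))^k)"
  proof (rule sum.cong[OF refl])
    fix k
    have "(\<theta>^j)^((a*k) mod n) = \<theta>^(((a*k) mod n) * j)" by (simp add: power_mult mult.commute)
    also have "\<dots> = \<theta>^((a*j) * k)" unfolding th_mult by (simp add: ac_simps)
    also have "\<dots> = \<theta>^(((a*j) mod n) * k)" unfolding th_mult ..
    also have "\<dots> = (\<theta>^((a*j) mod n))^k" by (simp add: power_mult)
    finally show "f (coeff c k) * (\<theta>^j)^((a*k) mod n) = f (coeff c k) * (\<theta>^((a*j) mod n))^k" by simp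
  qed
  also have "\<dots> = poly (map_poly f c) (\<theta>^((a*j) mod n))" using poly_map_lt[OF d] by simp
  finally show ?thesis .
qed

lemma poly_X1: "poly X 1 = 0" by (simp add: poly_monom)

lemma weight_full:
  assumes mult: "\<And>x. 0 < x \<Longrightarrow> x < n \<Longrightarrow> x \<in> Z \<or> (a*x) mod n \<in> Z"
    and c: "c \<in> cyclic_code n gp" and odd: "odd_like n c"
  shows "hweight n (c * twist n a c mod X) = n"
proof -
  let ?t = "twist n a c"
  define r where "r = c * ?t mod X"
  define R where "R = map_poly f r"
  have dc: "degree c < n" using C_deg[OF c] .
  have R: "R = (map_poly f c * map_poly f ?t) mod map_poly f X"
    unfolding R_def r_def by (simp add: map_mod map_mult)
  have polyR: "poly R (\<theta>^j) = poly (map_poly f c) (\<theta>^j) * poly (map_poly f ?t) (\<theta>^j)" for j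
    unfolding R by (simp add: poly_mod[OF poly_mapX])
  have rootsR: "poly R (\<theta>^j) = 0" if "0 < j" "j < n" for j
  proof -
    from mult[OF that] show ?thesis
    proof
      assume "j \<in> Z" then show ?thesis using polyR C_roots[OF c] by simp
    next
      assume "(a*j) mod n \<in> Z" then show ?thesis using polyR poly_twist[OF dc] C_roots[OF c] by simp
    qed
  qed
  have s1: "poly c 1 = (\<Sum>i<n. coeff c i)" using poly_lt[OF dc, of 1] by simp
  have s2: "poly ?t 1 = (\<Sum>i<n. coeff c i)" unfolding twist_def by (simp add: poly_sum poly_monom)
  have "poly r 1 = poly c 1 * poly ?t 1" unfolding r_def by (simp add: poly_mod[OF poly_X1])
  then have "poly r 1 \<noteq> 0" using s1 s2 odd unfolding odd_like_def by simp
  then have R1: "poly R 1 \<noteq> 0" unfolding R_def using poly_map[of r 1] f1 f_eq0 by simp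
  then have R0: "R \<noteq> 0" by auto
  have dR: "degree R < n"
  proof -
    have "r \<noteq> 0" using R0 unfolding R_def by (metis map_poly_0)
    then have "degree r < n" using degree_mod_less[OF X_nz, of "c * ?t"] degX unfolding r_def by simp
    then show ?thesis unfolding R_def by (simp add: degree_map)
  qed
  let ?J = "{1..<n}"
  let ?Q = "\<Prod>k\<in>?J. [:- (\<theta> ^ k), 1:]"
  have injJ: "inj_on (\<lambda>k. \<theta>^k) ?J" using th_inj by (rule inj_on_subset) auto
  have dQ: "degree ?Q = n - 1" using degree_linprod[of ?J "\<lambda>k. \<theta>^k"] by simp
  have Q0: "?Q \<noteq> 0" by (rule linprod_nz)
  have const: "\<exists>l. p = smult l ?Q \<and> l \<noteq> 0" if dvp: "?Q dvd p" and nzp: "p \<noteq> 0" and dgp: "degree p < n" for p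
  proof -
    obtain s where s: "p = ?Q * s" using dvp by blast
    have s0: "s \<noteq> 0" using s nzp by auto
    have "degree p = n - 1 + degree s" using s s0 Q0 dQ by (simp add: degree_mult_eq)
    then have "degree s = 0" using dgp by simp
    then have "s = [:coeff s 0:]" by (metis degree_0_id)
    then have "p = ?Q * [:coeff s 0:]" using s by simp
    then have "p = smult (coeff s 0) ?Q" by simp
    moreover have "coeff s 0 \<noteq> 0" using s0 \<open>s = [:coeff s 0:]\<close> by (metis pCons_0_0)
    ultimately show ?thesis by blast
  qed
  have "?Q dvd R" using roots_prod_dvd[of ?J "\<lambda>k. \<theta>^k" R] injJ rootsR by auto
  then obtain l where l: "R = smult l ?Q" "l \<noteq> 0" using const R0 dR by blast
  define E where "E = (\<Sum>k<n. monom (1::'b) k)"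
  have cE: "coeff E k = (if k < n then 1 else 0)" for k unfolding E_def by (simp add: coeff_sum coeff_monom)
  have E0: "E \<noteq> 0" using cE[of 0] n0 by auto
  have dE: "degree E < n"
  proof -
    have "degree E \<le> n - 1" by (rule degree_le) (use cE n0 in auto)
    then show ?thesis using n0 by simp
  qed
  have rootsE: "poly E (\<theta>^j) = 0" if "j \<in> ?J" for j
  proof -
    have ne: "\<theta>^j \<noteq> 1" using th_prim that by auto
    have "(\<theta>^j)^n = 1" by (metis power_mult mult.commute th_n power_one)
    then have "(\<Sum>k<n. (\<theta>^j)^k) = 0" using geometric_sum[OF ne, of n] by simp
    then show ?thesis unfolding E_def by (simp add: poly_sum poly_monom)
  qed
  have "?Q dvd E" using roots_prod_dvd[of ?J "\<lambda>k. \<theta>^k" E] injJ rootsE by auto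
  then obtain \<mu> where mu: "E = smult \<mu> ?Q" "\<mu> \<noteq> 0" using const E0 dE by blast
  have cR: "coeff R k \<noteq> 0" if "k < n" for k
  proof -
    have "coeff ?Q k * \<mu> = 1" using cE[of k] that mu(1) by (simp add: mult.commute)
    then have "coeff ?Q k \<noteq> 0" by auto
    then show ?thesis using l by simp
  qed
  have "hweight n r = hweight n R"
    unfolding hweight_def R_def by (simp add: coeff_map f_eq0)
  also have "\<dots> = n"
  proof -
    have "{i. i < n \<and> coeff R i \<noteq> 0} = {..<n}" using cR by auto
    then show ?thesis unfolding hweight_def by simp
  qed
  finally show ?thesis unfolding r_def .
qed

end

context dsetup begin

lemma Z_parts:
  assumes "i \<in> {0,1}"
  shows "finite (Dset n1 n2 g \<nu> i)" "finite ((\<lambda>k. n2*k) ` QRset n1 j)" "finite ((\<lambda>k. n1*k) ` QRset n2 h)"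
    "Dset n1 n2 g \<nu> i \<inter> ((\<lambda>k. n2*k) ` QRset n1 j \<union> (\<lambda>k. n1*k) ` QRset n2 h) = {}"
    "(\<lambda>k. n2*k) ` QRset n1 j \<inter> (\<lambda>k. n1*k) ` QRset n2 h = {}"
proof -
  let ?D = "Dset n1 n2 g \<nu> i" and ?A = "(\<lambda>k. n2*k) ` QRset n1 j" and ?B = "(\<lambda>k. n1*k) ` QRset n2 h"
  show "finite ?D" using D_un finite_U assms by (metis finite_Un insertE singletonD)
  show "finite ?A" "finite ?B" unfolding QRset_def by auto
  show "?D \<inter> (?A \<union> ?B) = {}"
  proof -
    have "\<not> coprime x (n1*n2)" if "x \<in> ?A \<union> ?B" for x
      using that p1 p2 by (auto simp: QRset_def)
    moreover have "coprime x (n1*n2)" if "x \<in> ?D" for x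
      using that Dset_char[OF assms(1)] unfolding U_def by auto
    ultimately show ?thesis by blast
  qed
  show "?A \<inter> ?B = {}"
  proof -
    have False if "k \<in> QRset n1 j" "k' \<in> QRset n2 h" "n2*k = n1*k'" for k k'
    proof -
      have "n1 dvd n2 * k" using that(3) by simp
      then have "n1 dvd k" using cop12 by (simp add: coprime_dvd_mult_right_iff)
      then show False using QR_range[OF that(1)] by (simp add: nat_dvd_not_less)
    qed
    then show ?thesis by blast
  qed
qed

lemma rootprod_reindex:
  assumes "m > 0"
  shows "rootprod \<theta> S m = (\<Prod>k\<in>(\<lambda>j. m*j) ` S. [:- (\<theta> ^ k), 1:])"
proof -
  have "inj_on (\<lambda>j. m*j) S" using assms by (simp add: inj_on_def)
  then show ?thesis unfolding rootprod_def by (simp add: prod.reindex)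
qed

lemma Z_prod:
  assumes "i \<in> {0,1}"
  shows "rootprod \<theta> (Dset n1 n2 g \<nu> i) 1 * rootprod \<theta> (QRset n1 j) n2 * rootprod \<theta> (QRset n2 h) n1
       = (\<Prod>k\<in>Zs i j h. [:- (\<theta> ^ k), 1:])"
proof -
  note zp = Z_parts[OF assms]
  have "(\<Prod>k\<in>Zs i j h. [:- (\<theta> ^ k), 1:]) =
     (\<Prod>k\<in>Dset n1 n2 g \<nu> i. [:- (\<theta> ^ k), 1:]) *
     ((\<Prod>k\<in>(\<lambda>k. n2*k) ` QRset n1 j. [:- (\<theta> ^ k), 1:]) * (\<Prod>k\<in>(\<lambda>k. n1*k) ` QRset n2 h. [:- (\<theta> ^ k), 1:]))"
    unfolding Zs_def Un_assoc
    by (simp add: prod.union_disjoint zp)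
  moreover have r0: "rootprod \<theta> (Dset n1 n2 g \<nu> i) 1 = (\<Prod>k\<in>Dset n1 n2 g \<nu> i. [:- (\<theta> ^ k), 1:])"
    unfolding rootprod_def by simp
  moreover have r1: "rootprod \<theta> (QRset n1 j) n2 = (\<Prod>k\<in>(\<lambda>k. n2*k) ` QRset n1 j. [:- (\<theta> ^ k), 1:])"
    by (rule rootprod_reindex) (use n2_gt2 in simp)
  moreover have r2: "rootprod \<theta> (QRset n2 h) n1 = (\<Prod>k\<in>(\<lambda>k. n1*k) ` QRset n2 h. [:- (\<theta> ^ k), 1:])"
    by (rule rootprod_reindex) (use n1_gt2 in simp)
  ultimately show ?thesis by (simp only: mult.assoc)
qed

lemma L_g_1: "L1 g = -1" using L_g1 Legendre_cong[of "int g" "int g1" "int n1"] gg1 by (simp add: cong_int_iff)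
lemma L_g_2: "L2 g = -1" using L_g2 Legendre_cong[of "int g" "int g2" "int n2"] gg2 by (simp add: cong_int_iff)

lemma minus_one_L:
  assumes "prime p" "p mod 4 = 3" "p dvd N" "N > 0"
  shows "Legendre (int (N - 1)) (int p) = -1"
proof -
  have "[int (N - 1) = -1] (mod int p)"
  proof -
    have "int (N - 1) = int N - 1" using assms(4) by simp
    moreover have "[int N = 0] (mod int p)" using assms(3) by (simp add: cong_0_iff)
    ultimately show ?thesis by (metis cong_diff cong_refl diff_0)
  qed
  then show ?thesis using Legendre_cong Legendre_minus_one[OF assms(1,2)] by metis
qed

lemma cop_m1: "coprime (n1*n2 - 1) (n1*n2)"
proof -
  have "n1*n2 > 0" using n1_gt2 n2_gt2 by simp
  then show ?thesis by (rule coprime_diff_one_left_nat)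
qed

lemma diag_m1: "(k + ((n1*n2 - 1)*k) mod (n1*n2)) mod (n1*n2) = 0"
proof -
  have "(k + ((n1*n2 - 1)*k) mod (n1*n2)) mod (n1*n2) = (k + (n1*n2 - 1)*k) mod (n1*n2)"
    by (simp add: mod_add_right_eq)
  also have "k + (n1*n2 - 1)*k = n1*n2*k" using n1_gt2 n2_gt2
    by (cases "n1*n2") (auto simp: algebra_simps)
  finally show ?thesis by simp
qed

end

context code begin

lemma gp_in: "gp \<in> cyclic_code n gp"
  unfolding C_char using m_pos by (intro CollectI exI[of _ 1]) simp

lemma gp_odd: "odd_like n gp"
proof -
  have d: "degree gp < n" using deg_gp card_Z_lt by simp
  have "(\<Sum>i<n. coeff gp i) = poly gp 1" using poly_lt[OF d, of 1] by simp
  moreover have "poly gp 1 \<noteq> 0"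
  proof
    assume "poly gp 1 = 0"
    then have "poly (map_poly f gp) 1 = 0" using poly_map[of gp 1] f1 f0 by simp
    then have "(\<Prod>k\<in>Z. 1 - \<theta>^k) = 0" unfolding gmap by (simp add: poly_prod)
    then obtain k where "k \<in> Z" "\<theta>^k = 1" using finZ by (auto simp: prod_zero_iff)
    then show False using Zr th_prim by auto
  qed
  ultimately show ?thesis unfolding odd_like_def by simp
qed

lemma hweight_le: "hweight n c \<le> n"
  unfolding hweight_def using card_mono[of "{..<n}" "{i. i < n \<and> coeff c i \<noteq> 0}"] by auto

lemma main_code:
  assumes mult: "\<And>x. 0 < x \<Longrightarrow> x < n \<Longrightarrow> x \<in> Z \<or> (a*x) mod n \<in> Z"
  defines "dw \<equiv> min_odd_like_weight n (cyclic_code n gp)"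
  shows "real dw \<ge> sqrt (real n)"
    and "(\<And>k. (k + (a'*k) mod n) mod n = 0) \<Longrightarrow>
         (\<And>x. 0 < x \<Longrightarrow> x < n \<Longrightarrow> x \<in> Z \<or> (a'*x) mod n \<in> Z) \<Longrightarrow>
         int dw ^ 2 - int dw + 1 \<ge> int n"
proof -
  let ?W = "{hweight n c | c. c \<in> cyclic_code n gp \<and> odd_like n c}"
  have fin: "finite ?W" by (rule finite_subset[of _ "{..n}"]) (auto simp: hweight_le)
  have ne: "?W \<noteq> {}" using gp_in gp_odd by blast
  have "dw \<in> ?W" unfolding dw_def min_odd_like_weight_def using Min_in[OF fin ne] .
  then obtain c where c: "c \<in> cyclic_code n gp" "odd_like n c" "dw = hweight n c" by blast
  have dc: "degree c < n" using C_deg[OF c(1)] .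
  have "n \<le> dw * dw" using weight_full[OF mult c(1,2)] weight_bound[OF n0 dc, of a] c(3) by simp
  then have "real n \<le> real dw ^ 2" by (simp add: power2_eq_square flip: of_nat_mult)
  then show "real dw \<ge> sqrt (real n)" by (simp add: real_le_lsqrt)
  assume diag: "\<And>k. (k + (a'*k) mod n) mod n = 0"
    and mult': "\<And>x. 0 < x \<Longrightarrow> x < n \<Longrightarrow> x \<in> Z \<or> (a'*x) mod n \<in> Z"
  have "n + dw \<le> dw * dw + 1"
    using weight_full[OF mult' c(1,2)] weight_bound_diag[OF n0 dc diag] c(3) by simp
  then have "int (n + dw) \<le> int (dw * dw + 1)" by (simp only: of_nat_le_iff)
  then have "int n + int dw \<le> int dw * int dw + 1" by simp
  then show "int dw ^ 2 - int dw + 1 \<ge> int n" by (simp add: power2_eq_square)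
qed

end

theorem mainTheorem9:
  fixes n1 n2 q g1 g2 g \<nu> :: nat
    and f :: "'a::{field,finite} \<Rightarrow> 'b::{field,finite}"
    and \<theta> :: 'b
    and gen :: "nat \<Rightarrow> nat \<Rightarrow> nat \<Rightarrow> 'a poly"
  assumes "prime n1" "prime n2" "odd n1" "odd n2" "n1 \<noteq> n2"
    and "\<exists>p k. prime p \<and> k > 0 \<and> q = p ^ k"
    and "card (UNIV :: 'a set) = q"
    and "coprime q (n1 * n2)"
    and "residue_primroot n1 g1" "residue_primroot n2 g2"
    and "[g = g1] (mod n1)" "[g = g2] (mod n2)"
    and "[\<nu> = g] (mod n1)" "[\<nu> = 1] (mod n2)"
    \<comment> \<open>GF(q^N) with N = ord_n(q), containing GF(q) via the field embedding f\<close>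
    and "card (UNIV :: 'b set) = q ^ ord (n1 * n2) q"
    and "inj f" "f 0 = 0" "f 1 = 1"
    and "\<And>x y. f (x + y) = f x + f y" "\<And>x y. f (x * y) = f x * f y"
    \<comment> \<open>\<theta> a primitive n-th root of unity\<close>
    and "\<theta> ^ (n1 * n2) = 1" "\<And>k. 0 < k \<Longrightarrow> k < n1 * n2 \<Longrightarrow> \<theta> ^ k \<noteq> 1"
    \<comment> \<open>q \<in> D_0 and q is a quadratic residue mod n1 and mod n2\<close>
    and "q mod (n1 * n2) \<in> Dset n1 n2 g \<nu> 0"
    and "QuadRes (int n1) (int (q mod n1))" "QuadRes (int n2) (int (q mod n2))"
    \<comment> \<open>gen i j h is the polynomial over GF(q) equal to d_i(x) d_j^(n1)(x) d_h^(n2)(x)\<close>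
    and "\<And>i j h. i \<in> {0,1} \<Longrightarrow> j \<in> {0,1} \<Longrightarrow> h \<in> {0,1} \<Longrightarrow>
           map_poly f (gen i j h) =
             rootprod \<theta> (Dset n1 n2 g \<nu> i) 1 * rootprod \<theta> (QRset n1 j) n2
               * rootprod \<theta> (QRset n2 h) n1"
  shows "\<forall>i\<in>{0,1}. \<forall>j\<in>{0,1}. \<forall>h\<in>{0,1}.
           let C = cyclic_code (n1 * n2) (gen i j h); dw = min_odd_like_weight (n1 * n2) C in
           (\<forall>c\<in>C. degree c < n1 * n2)
           \<and> code_dim C = (n1 * n2 + 1) div 2
           \<and> (\<exists>c\<in>C. odd_like (n1 * n2) c)
           \<and> real dw \<ge> sqrt (real (n1 * n2))
           \<and> (n1 mod 8 = 7 \<and> n2 mod 8 = 7 \<longrightarrow> int dw ^ 2 - int dw + 1 \<ge> int (n1 * n2))"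
proof (intro ballI)
  interpret D: dsetup n1 n2 g1 g2 g \<nu>
    by unfold_locales (use assms in auto)
  fix i j h :: nat assume ijh: "i \<in> {0,1}" "j \<in> {0,1}" "h \<in> {0,1}"
  interpret C: code f "n1*n2" \<theta> "D.Zs i j h" "gen i j h"
  proof unfold_locales
    show "inj f" "f 0 = 0" "f 1 = 1" using assms(16-18) by auto
    show "f (x + y) = f x + f y" "f (x * y) = f x * f y" for x y using assms(19,20) by auto
    show "1 < n1 * n2" using D.n1_gt2 D.n2_gt2 by (simp add: one_less_mult)
    show "\<theta> ^ (n1 * n2) = 1" by (rule assms(21))
    show "\<theta> ^ k \<noteq> 1" if "0 < k" "k < n1 * n2" for k using assms(22) that by blast
    show "0 < x \<and> x < n1 * n2" if "x \<in> D.Zs i j h" for x using D.Z_range[OF ijh(1) that] .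
    show "map_poly f (gen i j h) = (\<Prod>k\<in>D.Zs i j h. [:- (\<theta> ^ k), 1:])"
      using assms(26)[OF ijh] D.Z_prod[OF ijh(1)] by simp
  qed
  let ?C = "cyclic_code (n1 * n2) (gen i j h)"
  have deg: "\<forall>c\<in>?C. degree c < n1 * n2" using C.C_deg by blast
  have dim: "code_dim ?C = (n1 * n2 + 1) div 2"
  proof -
    have "code_dim ?C = n1 * n2 - card (D.Zs i j h)" using C.code_dim_eq C.deg_gp unfolding C.m_def by simp
    also have "\<dots> = (n1 * n2 + 1) div 2" using D.Z_card[OF ijh] by linarith
    finally show ?thesis .
  qed
  have odd: "\<exists>c\<in>?C. odd_like (n1 * n2) c" using C.gp_in C.gp_odd by blast
  have multg: "x \<in> D.Zs i j h \<or> (g*x) mod (n1*n2) \<in> D.Zs i j h" if "0 < x" "x < n1*n2" for x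
    using D.Z_mult[OF ijh D.cop_g D.L_g_1 D.L_g_2 that] .
  have sq: "real (min_odd_like_weight (n1 * n2) ?C) \<ge> sqrt (real (n1 * n2))"
    using C.main_code(1)[OF multg] by blast
  have m8: "int (min_odd_like_weight (n1 * n2) ?C) ^ 2 - int (min_odd_like_weight (n1 * n2) ?C) + 1 \<ge> int (n1 * n2)"
    if "n1 mod 8 = 7" "n2 mod 8 = 7"
  proof -
    have m4: "n1 mod 4 = 3" "n2 mod 4 = 3"
      using mod_mod_cancel[of 4 8 n1] mod_mod_cancel[of 4 8 n2] that by simp_all
    have N0: "n1 * n2 > 0" using D.n1_gt2 D.n2_gt2 by simp
    have La1: "D.L1 (n1*n2 - 1) = -1" using D.minus_one_L[OF assms(1) m4(1) _ N0] by simp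
    have La2: "D.L2 (n1*n2 - 1) = -1" using D.minus_one_L[OF assms(2) m4(2) _ N0] by simp
    have multm: "x \<in> D.Zs i j h \<or> ((n1*n2 - 1)*x) mod (n1*n2) \<in> D.Zs i j h" if "0 < x" "x < n1*n2" for x
      using D.Z_mult[OF ijh D.cop_m1 La1 La2 that] .
    show ?thesis using C.main_code(2)[OF multg D.diag_m1 multm] by blast
  qed
  show "let C = cyclic_code (n1 * n2) (gen i j h); dw = min_odd_like_weight (n1 * n2) C in
           (\<forall>c\<in>C. degree c < n1 * n2)
           \<and> code_dim C = (n1 * n2 + 1) div 2
           \<and> (\<exists>c\<in>C. odd_like (n1 * n2) c)
           \<and> real dw \<ge> sqrt (real (n1 * n2))
           \<and> (n1 mod 8 = 7 \<and> n2 mod 8 = 7 \<longrightarrow> int dw ^ 2 - int dw + 1 \<ge> int (n1 * n2))"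
    unfolding Let_def using deg dim odd sq m8 by blast
qed

end
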